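(* Suppose goods are perishable ($d=\infty$) and the inverse hazard rate $v\mapsto(1-F(v))/f(v)$ is non-increasing. Let $w,w'\in[0,1]$ with $w>w'$, and let $(\hat v^w_k)_k,K_w$ and $(\hat v^{w'}_k)_k,K_{w'}$ be the thresholds and maximal queue lengths defined in the context. Then there exists $\bar k\in\{1,2,\dots,\min\{K_{w'},K_w\}\}$ such that $\hat v^w_k\le\hat v^{w'}_k$ for all $k\le\bar k$, and $\hat v^w_k>\hat v^{w'}_k$ for all $k$ with $\bar k+1\le k\le\min\{K_{w'},K_w\}$.
   Context: Goods arrive by a Poisson process with rate $\mu>0$, buyers by an independent Poisson process with rate $\lambda>0$; values are i.i.d. from $F$ on $[0,1]$ with density $f>0$, $f$ absolutely continuous, $J(v)=v-\frac{1-F(v)}{f(v)}$ strictly increasing with $J(0)<0$; waiting cost $c>0$. A planner maximizes seller revenue plus $w\in[0,1]$ times buyers' net surplus; the optimal policy keeps the buyer ranked $k$-th in the queue iff his value is at least $\hat v^w_k$, where the thresholds are defined with the weighted virtual value $J_w(v):=v-(1-w)\frac{1-F(v)}{f(v)}$ as follows. Let $\rho(v):=\lambda[1-F(v)]/\mu$. $\hat v^w_1=J_w^{-1}(c/\mu)$ if $c/\mu<1$ and $\hat v^w_1=1$ otherwise; for $k\ge2$, if $\hat v^w_{k-1}<1$ and $\mu\int_{\hat v^w_{k-1}}^1\frac{J_w'(v)}{1+\rho(v)+\dots+\rho(v)^{k-1}}dv\ge c$, then $\hat v^w_k$ is the unique $x\in(\hat v^w_{k-1},1]$ with $\mu\int_{\hat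 v^w_{k-1}}^{x}\frac{J_w'(v)}{1+\rho(v)+\dots+\rho(v)^{k-1}}dv=c$; otherwise $\hat v^w_k=1$. $K_w$ is the number of $k$ with $\hat v^w_k<1$. *)

theory Defs
  imports "HOL-Analysis.Analysis"
begin

definition Jw :: "(real \<Rightarrow> real) \<Rightarrow> (real \<Rightarrow> real) \<Rightarrow> real \<Rightarrow> real \<Rightarrow> real" where
  "Jw F f w v = v - (1 - w) * (1 - F v) / f v"

text \<open>Derivative of J_w, written out: f is absolutely continuous with (a.e.) derivative g,
  F' = f, hence J_w' = 1 + (1-w) (1 + (1-F) g / f^2).\<close>
definition Jwd :: "(real \<Rightarrow> real) \<Rightarrow> (real \<Rightarrow> real) \<Rightarrow> (real \<Rightarrow> real) \<Rightarrow> real \<Rightarrow> real \<Rightarrow> real" where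
  "Jwd F f g w v = 1 + (1 - w) * (1 + (1 - F v) * g v / (f v)\<^sup>2)"

definition rho :: "real \<Rightarrow> real \<Rightarrow> (real \<Rightarrow> real) \<Rightarrow> real \<Rightarrow> real" where
  "rho lam mu F v = lam * (1 - F v) / mu"

definition integrand :: "real \<Rightarrow> real \<Rightarrow> (real \<Rightarrow> real) \<Rightarrow> (real \<Rightarrow> real) \<Rightarrow> (real \<Rightarrow> real)
    \<Rightarrow> real \<Rightarrow> nat \<Rightarrow> real \<Rightarrow> real" where
  "integrand lam mu F f g w k v = Jwd F f g w v / (\<Sum>i<k. (rho lam mu F v) ^ i)"

text \<open>Threshold for the buyer ranked k-th (k \<ge> 1); index 0 is unused (dummy value 1).\<close>
fun vhat :: "real \<Rightarrow> real \<Rightarrow> real \<Rightarrow> (real \<Rightarrow> real) \<Rightarrow> (real \<Rightarrow> real) \<Rightarrow> (real \<Rightarrow> real)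
    \<Rightarrow> real \<Rightarrow> nat \<Rightarrow> real" where
  "vhat lam mu c F f g w 0 = 1"
| "vhat lam mu c F f g w (Suc 0) =
     (if c / mu < 1 then (THE x. x \<in> {0..1} \<and> Jw F f w x = c / mu) else 1)"
| "vhat lam mu c F f g w (Suc (Suc m)) =
     (let p = vhat lam mu c F f g w (Suc m); k = Suc (Suc m) in
      if p < 1 \<and> mu * integral {p..1} (integrand lam mu F f g w k) \<ge> c
      then (THE x. x \<in> {p<..1} \<and> mu * integral {p..x} (integrand lam mu F f g w k) = c)
      else 1)"

definition Kw :: "real \<Rightarrow> real \<Rightarrow> real \<Rightarrow> (real \<Rightarrow> real) \<Rightarrow> (real \<Rightarrow> real) \<Rightarrow> (real \<Rightarrow> real)
    \<Rightarrow> real \<Rightarrow> nat" where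
  "Kw lam mu c F f g w = card {k. 1 \<le> k \<and> vhat lam mu c F f g w k < 1}"

end

theory Submission
  imports Defs
begin

locale mkt =
  fixes lam mu c :: real and F f g :: "real \<Rightarrow> real"
  assumes mu_pos: "mu > 0" and lam_pos: "lam > 0" and c_pos: "c > 0"
    and c_lt: "c < mu"
    and f_pos: "\<forall>v\<in>{0..1}. f v > 0"
    and g_int: "g absolutely_integrable_on {0..1}"
    and f_ac: "\<forall>x\<in>{0..1}. (g has_integral (f x - f 0)) {0..x}"
    and F_def: "\<forall>x\<in>{0..1}. F x = integral {0..x} f"
    and F_one: "F 1 = 1"
    and J_mono: "strict_mono_on {0..1} (Jw F f 0)"
    and J0: "Jw F f 0 0 < 0"
    and ihr: "\<forall>x\<in>{0..1}. \<forall>y\<in>{0..1}. x \<le> y \<longrightarrow> (1 - F y) / f y \<le> (1 - F x) / f x"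
begin

lemma g_integrable: "g integrable_on {0..1}"
  using g_int absolutely_integrable_on_def by blast

lemma f_eq: "x \<in> {0..1} \<Longrightarrow> f x = f 0 + integral {0..x} g"
proof -
  assume x: "x \<in> {0..1}"
  have "integral {0..x} g = f x - f 0" using f_ac x integral_unique by blast
  then show ?thesis by simp
qed

lemma f_cont: "continuous_on {0..1} f"
proof -
  have "continuous_on {0..1} (\<lambda>x. f 0 + integral {0..x} g)"
    by (intro continuous_intros indefinite_integral_continuous_1 g_integrable)
  then show ?thesis by (rule continuous_on_eq) (metis f_eq)
qed

lemma f_integrable: "f integrable_on {a..b}" if "{a..b} \<subseteq> {0..1}"
  using f_cont that integrable_continuous_interval continuous_on_subset by blast

lemma F_cont: "continuous_on {0..1} F"
proof -
  have "continuous_on {0..1} (\<lambda>x. integral {0..x} f)"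
    by (intro indefinite_integral_continuous_1 f_integrable) simp
  then show ?thesis by (rule continuous_on_eq) (simp add: F_def)
qed

lemma F_diff: "F y - F x = integral {x..y} f" if "0 \<le> x" "x \<le> y" "y \<le> 1"
proof -
  have "integral {0..x} f + integral {x..y} f = integral {0..y} f"
    using that f_integrable[of 0 y] by (intro Henstock_Kurzweil_Integration.integral_combine) auto
  then show ?thesis using that F_def by auto
qed

lemma F0: "F 0 = 0" using F_def by auto

lemma F_mono: "F x \<le> F y" if "0 \<le> x" "x \<le> y" "y \<le> 1"
proof -
  have "integral {x..y} f \<ge> 0"
  proof (rule integral_nonneg)
    show "f integrable_on {x..y}" using that by (intro f_integrable) auto
    show "0 \<le> f t" if "t \<in> {x..y}" for t using f_pos that \<open>0 \<le> x\<close> \<open>y \<le> 1\<close>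
      by (metis atLeastAtMost_iff less_imp_le order_trans)
  qed
  then show ?thesis using F_diff[OF that] by simp
qed

lemma F_range: "0 \<le> F x" "F x \<le> 1" if "x \<in> {0..1}"
  using F_mono[of 0 x] F_mono[of x 1] that unfolding F0 F_one atLeastAtMost_iff by simp_all


lemma g_diff: "integral {x..y} g = f y - f x" if "0 \<le> x" "x \<le> y" "y \<le> 1"
proof -
  have gi: "g integrable_on {0..y}"
    using g_integrable integrable_on_subinterval that by fastforce
  have "integral {0..x} g + integral {x..y} g = integral {0..y} g"
    using that gi by (intro Henstock_Kurzweil_Integration.integral_combine) auto
  then show ?thesis using f_eq[of x] f_eq[of y] that by auto
qed

lemma nonincr_deriv_nonpos:
  fixes h :: "real \<Rightarrow> real"
  assumes d: "(h has_real_derivative D) (at v within {v..1})" and v: "v < 1"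
    and mono: "\<And>y. y \<in> {v..1} \<Longrightarrow> h y \<le> h v"
  shows "D \<le> 0"
proof -
  have lim: "((\<lambda>y. (h y - h v) / (y - v)) \<longlongrightarrow> D) (at_right v)"
    using d v by (simp add: has_field_derivative_iff at_within_Icc_at_right)
  have ev: "eventually (\<lambda>y. (h y - h v) / (y - v) \<le> 0) (at_right v)"
  proof -
    have "eventually (\<lambda>y. y \<in> {v<..<1}) (at_right v)"
      using v by (intro eventually_at_right_real) auto
    then show ?thesis
    proof (rule eventually_mono)
      fix y assume y: "y \<in> {v<..<1}"
      then have "h y - h v \<le> 0" using mono[of y] by auto
      moreover have "y - v > 0" using y by auto
      ultimately show "(h y - h v) / (y - v) \<le> 0" by (simp add: divide_nonpos_pos)
    qed
  qed
  show ?thesis by (rule tendsto_upperbound[OF lim ev]) (simp add: trivial_limit_at_right_real)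
qed

lemma phi_ae:
  obtains N where "negligible N" "\<And>v. v \<in> {0..1} - N \<Longrightarrow> 0 \<le> 1 + (1 - F v) * g v / (f v)\<^sup>2"
proof -
  define g0 where "g0 = (\<lambda>x. if x \<in> {0..1} then g x else 0)"
  have "g0 integrable_on UNIV" unfolding g0_def
    using g_integrable Henstock_Kurzweil_Integration.integrable_restrict_UNIV by blast
  then have "\<And>a b. g0 integrable_on cbox a b"
    by (rule integrable_on_subcbox) auto
  then obtain N where N: "negligible N"
    and lim: "\<And>x e. \<lbrakk>x \<notin> N; 0 < e\<rbrakk> \<Longrightarrow>
               \<exists>d>0. \<forall>h. 0 < h \<and> h < d \<longrightarrow>
                         norm(integral (cbox x (x + h *\<^sub>R One)) g0 /\<^sub>R h ^ DIM(real) - g0 x) < e"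
    using integrable_ccontinuous_explicit by blast
  have "negligible (N \<union> {0,1})" using N by (simp add: negligible_insert)
  moreover have "0 \<le> 1 + (1 - F v) * g v / (f v)\<^sup>2" if v: "v \<in> {0..1} - (N \<union> {0,1})" for v
  proof -
    have v01: "0 < v" "v < 1" "v \<notin> N" using v by auto
    have fd: "(f has_real_derivative g v) (at v within {v..1})"
      unfolding has_field_derivative_iff Lim_within
    proof (intro allI impI)
      fix e :: real assume "e > 0"
      then obtain d where d: "d > 0" and dd: "\<forall>h. 0 < h \<and> h < d \<longrightarrow>
           norm(integral (cbox v (v + h *\<^sub>R One)) g0 /\<^sub>R h ^ DIM(real) - g0 v) < e"
        using lim v01 by blast
      show "\<exists>d>0. \<forall>y\<in>{v..1}. 0 < dist y v \<and> dist y v < d \<longrightarrow> dist ((f y - f v) / (y - v)) (g v) < e"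
      proof (intro exI conjI ballI impI)
        show "d > 0" by fact
        fix y assume y: "y \<in> {v..1}" and yd: "0 < dist y v \<and> dist y v < d"
        define t where "t = y - v"
        have t: "0 < t" "t < d" using y yd by (auto simp: t_def dist_real_def)
        have "integral (cbox v (v + t *\<^sub>R One)) g0 = integral {v..y} g0"
          by (simp add: t_def)
        also have "\<dots> = integral {v..y} g"
          using y v01 by (intro integral_cong) (auto simp: g0_def)
        also have "\<dots> = f y - f v" using y v01 by (intro g_diff) auto
        finally have "integral (cbox v (v + t *\<^sub>R One)) g0 = f y - f v" .
        moreover have "g0 v = g v" using v01 by (simp add: g0_def)
        moreover have "norm(integral (cbox v (v + t *\<^sub>R One)) g0 /\<^sub>R t ^ DIM(real) - g0 v) < e"
          using dd t by blast
        ultimately show "dist ((f y - f v) / (y - v)) (g v) < e"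
          by (simp add: dist_real_def t_def divide_inverse mult.commute)
      qed
    qed
    have Fd: "(F has_real_derivative f v) (at v within {v..1})"
    proof -
      have "((\<lambda>x. integral {0..x} f) has_real_derivative f v) (at v within {0..1})"
        using v01 by (intro integral_has_real_derivative f_cont) auto
      then have "((\<lambda>x. integral {0..x} f) has_real_derivative f v) (at v within {v..1})"
        by (rule DERIV_subset) (use v01 in auto)
      then show ?thesis
        by (rule has_field_derivative_transform_within[OF _ zero_less_one]) (use v01 F_def in auto)
    qed
    have fv: "f v > 0" using f_pos v01 by auto
    have hd: "((\<lambda>y. (1 - F y) / f y) has_real_derivative
               ((- f v) * f v - (1 - F v) * g v) / (f v * f v)) (at v within {v..1})"
    proof -
      have "((\<lambda>y. 1 - F y) has_real_derivative (- f v)) (at v within {v..1})"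
        using DERIV_diff[OF DERIV_const Fd] by simp
      from DERIV_divide[OF this fd] fv show ?thesis by simp
    qed
    have "((- f v) * f v - (1 - F v) * g v) / (f v * f v) \<le> 0"
      by (rule nonincr_deriv_nonpos[OF hd v01(2)]) (use ihr v01 in auto)
    then have "(- f v) * f v - (1 - F v) * g v \<le> 0"
      using fv by (smt (verit) divide_le_0_iff mult_pos_pos)
    then show ?thesis using fv by (simp add: field_simps power2_eq_square)
  qed
  ultimately show ?thesis using that by blast
qed


lemma integral_le_ae:
  fixes p q :: "real \<Rightarrow> real"
  assumes "p integrable_on T" "q integrable_on T" "negligible N" "\<And>x. x \<in> T - N \<Longrightarrow> p x \<le> q x"
  shows "integral T p \<le> integral T q"
proof -
  define p' where "p' = (\<lambda>x. if x \<in> N then q x else p x)"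
  have "p' integrable_on T"
    by (rule integrable_spike[OF assms(1) assms(3)]) (auto simp: p'_def)
  moreover have "integral T p = integral T p'"
    by (rule integral_spike[OF assms(3)]) (auto simp: p'_def)
  moreover have "integral T p' \<le> integral T q"
    by (rule integral_le[OF \<open>p' integrable_on T\<close> assms(2)]) (use assms(4) in \<open>auto simp: p'_def\<close>)
  ultimately show ?thesis by simp
qed

definition SS :: "nat \<Rightarrow> real \<Rightarrow> real" where
  "SS k v = (\<Sum>i<k. (rho lam mu F v) ^ i)"

definition MM :: "nat \<Rightarrow> real" where
  "MM k = (\<Sum>i<k. (lam / mu) ^ i)"

lemma rho_range: "0 \<le> rho lam mu F v" "rho lam mu F v \<le> lam / mu" if "v \<in> {0..1}"
  using F_range[OF that] mu_pos lam_pos unfolding rho_def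
  by (auto simp: field_simps intro!: mult_nonneg_nonneg)

lemma SS_ge1: "1 \<le> SS k v" if "k \<ge> 1" "v \<in> {0..1}"
proof -
  have "SS k v = (\<Sum>i\<in>insert 0 ({..<k} - {0}). (rho lam mu F v) ^ i)"
    unfolding SS_def using that by (intro sum.cong) auto
  also have "\<dots> = 1 + (\<Sum>i\<in>{..<k} - {0}. (rho lam mu F v) ^ i)"
    by (subst sum.insert) auto
  also have "\<dots> \<ge> 1" using rho_range[OF that(2)] by (auto intro!: sum_nonneg)
  finally show ?thesis .
qed

lemma SS_le: "SS k v \<le> MM k" if "v \<in> {0..1}"
  unfolding SS_def MM_def using rho_range[OF that]
  by (intro sum_mono power_mono) auto

lemma SS_one: "SS (Suc 0) v = 1" by (simp add: SS_def)

lemma MM_pos: "MM k > 0" if "k \<ge> 1"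
  using SS_ge1[OF that, of 0] SS_le[of 0 k] by auto

lemma SS_cont: "continuous_on {0..1} (SS k)"
  unfolding SS_def rho_def using F_cont mu_pos by (intro continuous_intros) auto

lemma integrand_eq: "integrand lam mu F f g w k v =
   (2 - w) / SS k v + ((1 - w) * (1 - F v) / ((f v)\<^sup>2 * SS k v)) * g v"
  if "v \<in> {0..1}" "k \<ge> 1"
proof -
  have "SS k v > 0" "f v > 0" using SS_ge1[OF that(2,1)] f_pos that by auto
  then show ?thesis unfolding integrand_def Jwd_def SS_def[symmetric]
    by (simp add: field_simps)
qed

lemma integrand_integrable: "integrand lam mu F f g w k integrable_on {a..b}"
  if "{a..b} \<subseteq> {0..1}" "k \<ge> 1"
proof -
  let ?c = "\<lambda>v. (1 - w) * (1 - F v) / ((f v)\<^sup>2 * SS k v)"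
  have SSpos: "\<And>v. v \<in> {0..1} \<Longrightarrow> SS k v \<noteq> 0" using SS_ge1[OF that(2)] by force
  have fpos: "\<And>v. v \<in> {0..1} \<Longrightarrow> f v \<noteq> 0" using f_pos by force
  have cc: "continuous_on {0..1} ?c"
    using SSpos fpos by (intro continuous_intros F_cont f_cont SS_cont) auto
  have "(\<lambda>v. ?c v * g v) absolutely_integrable_on {0..1}"
  proof (rule absolutely_integrable_bounded_measurable_product_real)
    show "?c \<in> borel_measurable (lebesgue_on {0..1})"
      by (rule continuous_imp_measurable_on_sets_lebesgue[OF cc]) auto
    show "bounded (?c ` {0..1})"
      by (intro compact_imp_bounded compact_continuous_image cc) auto
  qed (auto simp: g_int)
  then have i1: "(\<lambda>v. ?c v * g v) integrable_on {a..b}"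
    using that(1) integrable_on_subinterval absolutely_integrable_on_def by blast
  have cc2: "continuous_on {0..1} (\<lambda>v. (2 - w) / SS k v)"
    using SSpos by (intro continuous_intros SS_cont) auto
  have i2: "(\<lambda>v. (2 - w) / SS k v) integrable_on {a..b}"
    using continuous_on_subset[OF cc2 that(1)] integrable_continuous_interval by blast
  have "(\<lambda>v. (2 - w) / SS k v + ?c v * g v) integrable_on {a..b}"
    using integrable_add[OF i2 i1] .
  then show ?thesis
    by (rule integrable_eq) (use that integrand_eq in auto)
qed

end

context mkt begin

lemma Jwd_ge1: "0 \<le> 1 + (1 - F v) * g v / (f v)\<^sup>2 \<Longrightarrow> (w::real) \<le> 1 \<Longrightarrow> Jwd F f g w v \<ge> 1"
  unfolding Jwd_def by simp

lemma Jwd_mono: "0 \<le> 1 + (1 - F v) * g v / (f v)\<^sup>2 \<Longrightarrow> (w'::real) \<le> w \<Longrightarrow> Jwd F f g w v \<le> Jwd F f g w' v"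
  unfolding Jwd_def by (simp add: mult_right_mono)

lemma int_lower: "integral {a..b} (integrand lam mu F f g w k) \<ge> (b - a) / MM k"
  if "0 \<le> a" "a \<le> b" "b \<le> 1" "k \<ge> 1" "w \<le> 1"
proof -
  obtain N where N0: "negligible N" "\<And>v. v \<in> {0..1} - N \<Longrightarrow> 0 \<le> 1 + (1 - F v) * g v / (f v)\<^sup>2"
    using phi_ae by blast
  have N: "negligible N" "\<And>v w. v \<in> {0..1} - N \<Longrightarrow> w \<le> 1 \<Longrightarrow> Jwd F f g w v \<ge> 1"
    using N0 Jwd_ge1 by auto
  have "integral {a..b} (\<lambda>v. 1 / MM k) \<le> integral {a..b} (integrand lam mu F f g w k)"
  proof (rule integral_le_ae[OF _ integrand_integrable N(1)])
    fix v assume v: "v \<in> {a..b} - N"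
    then have v1: "v \<in> {0..1} - N" using that by auto
    have s: "1 \<le> SS k v" "SS k v \<le> MM k" using SS_ge1[OF that(4)] SS_le v1 by auto
    have "1 / MM k \<le> 1 / SS k v" using s by (intro divide_left_mono) auto
    also have "\<dots> \<le> Jwd F f g w v / SS k v"
      using N(2)[OF v1 that(5)] s by (intro divide_right_mono) auto
    finally show "1 / MM k \<le> integrand lam mu F f g w k v"
      unfolding integrand_def SS_def by simp
  qed (use that in auto)
  then show ?thesis using that by simp
qed

lemma int_pos: "integral {a..b} (integrand lam mu F f g w k) > 0"
  if "0 \<le> a" "a < b" "b \<le> 1" "k \<ge> 1" "w \<le> 1"
proof -
  have "(b - a) / MM k > 0" using MM_pos[OF that(4)] that by auto
  then show ?thesis using int_lower[of a b k w] that by auto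
qed

lemma int_nonneg: "integral {a..b} (integrand lam mu F f g w k) \<ge> 0"
  if "0 \<le> a" "b \<le> 1" "k \<ge> 1" "w \<le> 1"
proof (cases "a \<le> b")
  case True
  have "(b - a) / MM k \<ge> 0" using MM_pos[OF that(3)] True by simp
  then show ?thesis using int_lower[of a b k w] that True by linarith
next
  case False
  then show ?thesis by simp
qed

lemma int_mono_w: "integral {a..b} (integrand lam mu F f g w k) \<le> integral {a..b} (integrand lam mu F f g w' k)"
  if "0 \<le> a" "b \<le> 1" "k \<ge> 1" "w' \<le> w"
proof -
  obtain N where N0: "negligible N" "\<And>v. v \<in> {0..1} - N \<Longrightarrow> 0 \<le> 1 + (1 - F v) * g v / (f v)\<^sup>2"
    using phi_ae by blast
  show ?thesis
  proof (rule integral_le_ae[OF integrand_integrable integrand_integrable N0(1)])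
    fix v assume v: "v \<in> {a..b} - N"
    then have v1: "v \<in> {0..1} - N" using that by auto
    have s: "1 \<le> SS k v" using SS_ge1[OF that(3)] v1 by auto
    show "integrand lam mu F f g w k v \<le> integrand lam mu F f g w' k v"
      unfolding integrand_def SS_def[symmetric]
      using Jwd_mono[OF N0(2)[OF v1] that(4)] s by (intro divide_right_mono) auto
  qed (use that in auto)
qed

lemma int_mono_k: "integral {a..b} (integrand lam mu F f g w k) \<le> integral {a..b} (integrand lam mu F f g w (Suc 0))"
  if "0 \<le> a" "b \<le> 1" "k \<ge> 1" "w \<le> 1"
proof -
  obtain N where N0: "negligible N" "\<And>v. v \<in> {0..1} - N \<Longrightarrow> 0 \<le> 1 + (1 - F v) * g v / (f v)\<^sup>2"
    using phi_ae by blast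
  show ?thesis
  proof (rule integral_le_ae[OF integrand_integrable integrand_integrable N0(1)])
    fix v assume v: "v \<in> {a..b} - N"
    then have v1: "v \<in> {0..1} - N" using that by auto
    have s: "1 \<le> SS k v" using SS_ge1[OF that(3)] v1 by auto
    have j: "Jwd F f g w v \<ge> 1" using Jwd_ge1[OF N0(2)[OF v1] that(4)] .
    have "Jwd F f g w v / SS k v \<le> Jwd F f g w v / 1"
      using s j by (intro divide_left_mono) auto
    then show "integrand lam mu F f g w k v \<le> integrand lam mu F f g w (Suc 0) v"
      unfolding integrand_def SS_def[symmetric] using SS_one unfolding SS_def by simp
  qed (use that in auto)
qed

end

context mkt begin

abbreviation "vh w k \<equiv> vhat lam mu c F f g w k"

declare vhat.simps(2,3)[simp del]

lemma Jw_lin: "Jw F f w v = w * v + (1 - w) * Jw F f 0 v"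
  unfolding Jw_def by (simp add: algebra_simps)

lemma Jw_cont: "continuous_on {0..1} (Jw F f w)"
proof -
  have "\<And>v. v \<in> {0..1} \<Longrightarrow> f v \<noteq> 0" using f_pos by force
  then show ?thesis unfolding Jw_def[abs_def]
    by (intro continuous_intros F_cont f_cont) auto
qed

lemma Jw_strict: "Jw F f w x < Jw F f w y" if "x \<in> {0..1}" "y \<in> {0..1}" "x < y" "w \<in> {0..1}"
proof -
  have j: "Jw F f 0 x < Jw F f 0 y" by (rule strict_mono_onD[OF J_mono]) (use that in auto)
  have "w * x \<le> w * y" using that by (intro mult_left_mono) auto
  show ?thesis
  proof (cases "w = 1")
    case True then show ?thesis using that Jw_lin[of w x] Jw_lin[of w y] by simp
  next
    case False
    then have "(1 - w) * Jw F f 0 x < (1 - w) * Jw F f 0 y" using that j by (intro mult_strict_left_mono) auto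
    then show ?thesis using \<open>w * x \<le> w * y\<close> Jw_lin[of w x] Jw_lin[of w y] by linarith
  qed
qed

lemma v1_props: "vh w (Suc 0) \<in> {0..<1} \<and> Jw F f w (vh w (Suc 0)) = c / mu" if w: "w \<in> {0..1}"
proof -
  have cm: "c / mu < 1" "0 < c / mu" using c_lt mu_pos c_pos by auto
  have fp0: "f 0 > 0" "f 1 > 0" using f_pos by auto
  have "(1 - w) / f 0 \<ge> 0" using w fp0 by simp
  then have a: "Jw F f w 0 \<le> c / mu"
    using cm unfolding Jw_def by (simp add: F0)
  have J1: "Jw F f w 1 = 1" unfolding Jw_def by (simp add: F_one)
  have b: "c / mu \<le> Jw F f w 1" using cm J1 by simp
  have "\<exists>x. 0 \<le> x \<and> x \<le> 1 \<and> Jw F f w x = c / mu"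
    by (rule IVT'[of "Jw F f w" 0 "c / mu" 1, OF a b _ Jw_cont]) simp
  then obtain x where x: "0 \<le> x" "x \<le> 1" "Jw F f w x = c / mu"
    by blast
  have uniq: "y = x" if y: "y \<in> {0..1} \<and> Jw F f w y = c / mu" for y
  proof (rule ccontr)
    assume "y \<noteq> x"
    then consider "x < y" | "y < x" by linarith
    then show False
    proof cases
      case 1
      have "Jw F f w x < Jw F f w y" by (rule Jw_strict) (use x y w 1 in simp_all)
      then show False using x y by simp
    next
      case 2
      have "Jw F f w y < Jw F f w x" by (rule Jw_strict) (use x y w 2 in simp_all)
      then show False using x y by simp
    qed
  qed
  have th: "(THE y. y \<in> {0..1} \<and> Jw F f w y = c / mu) = x"
  proof (rule the_equality)
    show "x \<in> {0..1} \<and> Jw F f w x = c / mu" using x by simp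
  qed (rule uniq)
  have "x \<noteq> 1" using x(3) cm J1 by auto
  then have "x < 1" using x by simp
  have "vh w (Suc 0) = x" using cm th by (simp add: vhat.simps(2))
  then show ?thesis using \<open>x < 1\<close> x by simp
qed

lemma step_gen:
  assumes p: "0 \<le> p" "p < 1" and k: "k \<ge> 1" and w: "w \<in> {0..1}"
    and cond: "mu * integral {p..1} (integrand lam mu F f g w k) \<ge> c"
  shows "(THE x. x \<in> {p<..1} \<and> mu * integral {p..x} (integrand lam mu F f g w k) = c) \<in> {p<..1} \<and>
         mu * integral {p..(THE x. x \<in> {p<..1} \<and> mu * integral {p..x} (integrand lam mu F f g w k) = c)}
            (integrand lam mu F f g w k) = c"
proof -
  let ?I = "integrand lam mu F f g w k"
  let ?G = "\<lambda>x. mu * integral {p..x} ?I"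
  have cont: "continuous_on {p..1} ?G"
    using p k by (intro continuous_intros indefinite_integral_continuous_1 integrand_integrable) auto
  have a: "?G p \<le> c" using c_pos by simp
  obtain x where x: "p \<le> x" "x \<le> 1" "?G x = c"
    using IVT'[of ?G p c 1, OF a cond _ cont] p by auto
  have xp: "x \<noteq> p" using x c_pos by auto
  have incr: "?G y < ?G z" if "p \<le> y" "y < z" "z \<le> 1" for y z
  proof -
    have "integral {p..y} ?I + integral {y..z} ?I = integral {p..z} ?I"
      using that p k by (intro Henstock_Kurzweil_Integration.integral_combine integrand_integrable) auto
    moreover have "integral {y..z} ?I > 0" using that p w by (intro int_pos k) auto
    ultimately show ?thesis using mu_pos by (simp add: algebra_simps)
  qed
  have uniq: "y = x" if y: "y \<in> {p<..1} \<and> ?G y = c" for y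
  proof (rule ccontr)
    assume "y \<noteq> x"
    then consider "x < y" | "y < x" by linarith
    then show False
    proof cases
      case 1
      have "?G x < ?G y" by (rule incr) (use x y 1 in simp_all)
      then show False using x y by simp
    next
      case 2
      have "?G y < ?G x" by (rule incr) (use x y 2 in simp_all)
      then show False using x y by simp
    qed
  qed
  have th: "(THE y. y \<in> {p<..1} \<and> ?G y = c) = x"
  proof (rule the_equality)
    show "x \<in> {p<..1} \<and> ?G x = c" using x xp by simp
  qed (rule uniq)
  show ?thesis unfolding th using x xp by simp
qed

lemma vh_SS: "vh w (Suc (Suc m)) = (if vh w (Suc m) < 1 \<and> mu * integral {vh w (Suc m)..1} (integrand lam mu F f g w (Suc (Suc m))) \<ge> c
   then (THE x. x \<in> {vh w (Suc m)<..1} \<and> mu * integral {vh w (Suc m)..x} (integrand lam mu F f g w (Suc (Suc m))) = c) else 1)"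
  by (simp only: vhat.simps Let_def)

lemma vh_step:
  assumes w: "w \<in> {0..1}" and p: "0 \<le> vh w (Suc m)"
    and lt: "vh w (Suc (Suc m)) < 1"
  shows "vh w (Suc m) < vh w (Suc (Suc m)) \<and>
    mu * integral {vh w (Suc m)..vh w (Suc (Suc m))} (integrand lam mu F f g w (Suc (Suc m))) = c"
proof -
  let ?p = "vh w (Suc m)"
  have cnd: "?p < 1 \<and> mu * integral {?p..1} (integrand lam mu F f g w (Suc (Suc m))) \<ge> c"
    using lt unfolding vh_SS by (auto split: if_splits)
  have eq: "vh w (Suc (Suc m)) = (THE x. x \<in> {?p<..1} \<and> mu * integral {?p..x} (integrand lam mu F f g w (Suc (Suc m))) = c)"
    unfolding vh_SS by (rule if_P[OF cnd])
  show ?thesis using step_gen[of ?p "Suc (Suc m)" w] cnd p w unfolding eq[symmetric] by auto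
qed

lemma vh_range: "vh w k \<in> {0..1}" if w: "w \<in> {0..1}"
proof (induction k rule: nat_less_induct)
  case (1 k)
  show ?case
  proof (cases k)
    case 0 then show ?thesis by simp
  next
    case (Suc n)
    show ?thesis
    proof (cases n)
      case 0 then show ?thesis using v1_props[OF w] Suc by auto
    next
      case (Suc m)
      have p: "vh w (Suc m) \<in> {0..1}" using 1 \<open>k = Suc n\<close> Suc by auto
      let ?p = "vh w (Suc m)"
      let ?I = "integrand lam mu F f g w (Suc (Suc m))"
      show ?thesis
      proof (cases "?p < 1 \<and> mu * integral {?p..1} ?I \<ge> c")
        case True
        have eq: "vh w (Suc (Suc m)) = (THE x. x \<in> {?p<..1} \<and> mu * integral {?p..x} ?I = c)"
          unfolding vh_SS by (rule if_P[OF True])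
        show ?thesis using step_gen[of ?p "Suc (Suc m)" w] True p w \<open>k = Suc n\<close> Suc
          unfolding eq[symmetric] by auto
      next
        case False
        have eq: "vh w (Suc (Suc m)) = 1"
          unfolding vh_SS by (rule if_not_P[OF False])
        then show ?thesis using \<open>k = Suc n\<close> Suc by auto
      qed
    qed
  qed
qed

lemma vh_prev: "vh w (Suc (Suc m)) < 1 \<Longrightarrow> vh w (Suc m) < 1"
  unfolding vh_SS by (auto split: if_splits)

lemma vh_down: "vh w k < 1 \<Longrightarrow> 1 \<le> j \<Longrightarrow> j \<le> k \<Longrightarrow> vh w j < 1"
proof (induction k arbitrary: j)
  case 0 then show ?case by simp
next
  case (Suc k)
  show ?case
  proof (cases "j = Suc k")
    case True then show ?thesis using Suc by simp
  next
    case False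
    then have "j \<le> k" "k \<ge> 1" using Suc by auto
    then obtain m where "k = Suc m" by (cases k) auto
    then have "vh w k < 1" using vh_prev[of w m] Suc.prems(1) by simp
    then show ?thesis using Suc.IH[of j] \<open>j \<le> k\<close> Suc.prems(2) by simp
  qed
qed


lemma vh_accum:
  assumes w: "w \<in> {0..1}"
  shows "vh w (Suc n) < 1 \<Longrightarrow> vh w (Suc 0) \<le> vh w (Suc n) \<and>
     real n * (c / mu) \<le> integral {vh w (Suc 0)..vh w (Suc n)} (integrand lam mu F f g w (Suc 0))"
proof (induction n)
  case 0 then show ?case by simp
next
  case (Suc n)
  let ?I1 = "integrand lam mu F f g w (Suc 0)"
  let ?I = "integrand lam mu F f g w (Suc (Suc n))"
  have lt: "vh w (Suc n) < 1" using vh_prev Suc.prems by blast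
  note IH = Suc.IH[OF lt]
  have r: "vh w (Suc 0) \<in> {0..1}" "vh w (Suc n) \<in> {0..1}" "vh w (Suc (Suc n)) \<in> {0..1}"
    using vh_range[OF w] by blast+
  have st: "vh w (Suc n) < vh w (Suc (Suc n))"
      "mu * integral {vh w (Suc n)..vh w (Suc (Suc n))} ?I = c"
    using vh_step[OF w _ Suc.prems] r by auto
  have e1: "integral {vh w (Suc n)..vh w (Suc (Suc n))} ?I = c / mu"
    using st(2) mu_pos by (simp add: field_simps)
  have e2: "integral {vh w (Suc n)..vh w (Suc (Suc n))} ?I \<le> integral {vh w (Suc n)..vh w (Suc (Suc n))} ?I1"
    using r w by (intro int_mono_k) auto
  have e3: "integral {vh w (Suc 0)..vh w (Suc n)} ?I1 + integral {vh w (Suc n)..vh w (Suc (Suc n))} ?I1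
      = integral {vh w (Suc 0)..vh w (Suc (Suc n))} ?I1"
    using IH st r by (intro Henstock_Kurzweil_Integration.integral_combine integrand_integrable) auto
  show ?case using IH st e1 e2 e3 by (simp add: algebra_simps)
qed

lemma vh_finite: "finite {k. 1 \<le> k \<and> vh w k < 1}" if w: "w \<in> {0..1}"
proof -
  let ?I1 = "integrand lam mu F f g w (Suc 0)"
  define T where "T = integral {0..1} ?I1"
  have bound: "real n \<le> T * mu / c" if "vh w (Suc n) < 1" for n
  proof -
    note A = vh_accum[OF w that]
    have r: "vh w (Suc 0) \<in> {0..1}" "vh w (Suc n) \<in> {0..1}"
      using vh_range[OF w] by blast+
    have "integral {0..vh w (Suc 0)} ?I1 + integral {vh w (Suc 0)..1} ?I1 = T"
      unfolding T_def using r by (intro Henstock_Kurzweil_Integration.integral_combine integrand_integrable) auto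
    moreover have "integral {vh w (Suc 0)..vh w (Suc n)} ?I1 + integral {vh w (Suc n)..1} ?I1
        = integral {vh w (Suc 0)..1} ?I1"
      using r A by (intro Henstock_Kurzweil_Integration.integral_combine integrand_integrable) auto
    moreover have "integral {0..vh w (Suc 0)} ?I1 \<ge> 0" "integral {vh w (Suc n)..1} ?I1 \<ge> 0"
      using r w by (intro int_nonneg; simp)+
    ultimately have "real n * (c / mu) \<le> T" using A by linarith
    then show ?thesis using c_pos mu_pos by (simp add: field_simps)
  qed
  have "{k. 1 \<le> k \<and> vh w k < 1} \<subseteq> {..Suc (nat \<lceil>T * mu / c\<rceil>)}"
  proof
    fix k assume k: "k \<in> {k. 1 \<le> k \<and> vh w k < 1}"
    then obtain n where n: "k = Suc n" by (cases k) auto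
    then have "real n \<le> T * mu / c" using bound k by auto
    then have "n \<le> nat \<lceil>T * mu / c\<rceil>" by linarith
    then show "k \<in> {..Suc (nat \<lceil>T * mu / c\<rceil>)}" using n by simp
  qed
  then show ?thesis using finite_subset by blast
qed

lemma K_props:
  assumes w: "w \<in> {0..1}"
  shows "Kw lam mu c F f g w \<ge> 1" "\<And>k. 1 \<le> k \<Longrightarrow> k \<le> Kw lam mu c F f g w \<Longrightarrow> vh w k < 1"
proof -
  define A where "A = {k. 1 \<le> k \<and> vh w k < 1}"
  have fin: "finite A" unfolding A_def by (rule vh_finite[OF w])
  have one: "1 \<in> A" unfolding A_def using v1_props[OF w] by auto
  define M where "M = Max A"
  have MA: "M \<in> A" unfolding M_def using fin one Max_in by blast
  have "A = {1..M}"
  proof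
    show "A \<subseteq> {1..M}" unfolding M_def using fin by (auto simp: A_def)
    show "{1..M} \<subseteq> A"
    proof
      fix k assume k: "k \<in> {1..M}"
      have "vh w M < 1" using MA by (simp add: A_def)
      then have "vh w k < 1" using vh_down k by auto
      then show "k \<in> A" using k by (simp add: A_def)
    qed
  qed
  then have K: "Kw lam mu c F f g w = M" unfolding Kw_def A_def[symmetric] by simp
  show "Kw lam mu c F f g w \<ge> 1" using K MA by (simp add: A_def)
  fix k assume "1 \<le> k" "k \<le> Kw lam mu c F f g w"
  then have "k \<in> A" using K \<open>A = {1..M}\<close> by simp
  then show "vh w k < 1" by (simp add: A_def)
qed

lemma Jw_diff: "Jw F f w v - Jw F f w' v = (w - w') * ((1 - F v) / f v)"
  unfolding Jw_def by (simp add: algebra_simps diff_divide_distrib add_divide_distrib)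

lemma C1:
  assumes w: "w \<in> {0..1}" "w' \<in> {0..1}" "w' \<le> w"
  shows "vh w (Suc 0) \<le> vh w' (Suc 0)"
proof (rule ccontr)
  assume "\<not> ?thesis"
  then have lt: "vh w' (Suc 0) < vh w (Suc 0)" by simp
  note a = v1_props[OF w(1)] and b = v1_props[OF w(2)]
  have "Jw F f w (vh w' (Suc 0)) < Jw F f w (vh w (Suc 0))"
    using a b lt w by (intro Jw_strict) auto
  moreover have "Jw F f w (vh w' (Suc 0)) \<ge> Jw F f w' (vh w' (Suc 0))"
  proof -
    let ?v = "vh w' (Suc 0)"
    have v: "?v \<in> {0..1}" using b by auto
    have "f ?v > 0" using f_pos v by blast
    then have "(1 - F ?v) / f ?v \<ge> 0" using F_range[OF v] by simp
    then have "(w - w') * ((1 - F ?v) / f ?v) \<ge> 0" using w by (intro mult_nonneg_nonneg) auto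
    then show ?thesis using Jw_diff[of w ?v w'] by linarith
  qed
  ultimately show False using a b by linarith
qed

lemma C2:
  assumes w: "w \<in> {0..1}" "w' \<in> {0..1}" "w' \<le> w"
    and lt: "vh w (Suc (Suc m)) < 1" "vh w' (Suc (Suc m)) < 1"
    and gt: "vh w' (Suc m) < vh w (Suc m)"
  shows "vh w' (Suc (Suc m)) < vh w (Suc (Suc m))"
proof (rule ccontr)
  assume "\<not> ?thesis"
  then have le: "vh w (Suc (Suc m)) \<le> vh w' (Suc (Suc m))" by simp
  let ?p = "vh w (Suc m)" and ?x = "vh w (Suc (Suc m))"
  let ?p' = "vh w' (Suc m)" and ?x' = "vh w' (Suc (Suc m))"
  let ?I = "integrand lam mu F f g w (Suc (Suc m))" and ?I' = "integrand lam mu F f g w' (Suc (Suc m))"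
  have r: "?p \<in> {0..1}" "?x \<in> {0..1}" "?p' \<in> {0..1}" "?x' \<in> {0..1}"
    using vh_range w by blast+
  have s1: "?p < ?x" "mu * integral {?p..?x} ?I = c" using vh_step[OF w(1) _ lt(1)] r by auto
  have s2: "?p' < ?x'" "mu * integral {?p'..?x'} ?I' = c" using vh_step[OF w(2) _ lt(2)] r by auto
  have c1: "integral {?p'..?p} ?I' + integral {?p..?x'} ?I' = integral {?p'..?x'} ?I'"
    using r gt s1 le by (intro Henstock_Kurzweil_Integration.integral_combine integrand_integrable) auto
  have c2: "integral {?p..?x} ?I' + integral {?x..?x'} ?I' = integral {?p..?x'} ?I'"
    using r s1 le by (intro Henstock_Kurzweil_Integration.integral_combine integrand_integrable) auto
  have i1: "integral {?p'..?p} ?I' > 0" using r gt w by (intro int_pos) auto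
  have i2: "integral {?x..?x'} ?I' \<ge> 0" using r w by (intro int_nonneg) auto
  have i3: "integral {?p..?x} ?I \<le> integral {?p..?x} ?I'" using r w by (intro int_mono_w) auto
  have "integral {?p..?x} ?I < integral {?p'..?x'} ?I'" using c1 c2 i1 i2 i3 by linarith
  then have "mu * integral {?p..?x} ?I < mu * integral {?p'..?x'} ?I'" using mu_pos by simp
  then show False using s1 s2 by simp
qed

lemma main:
  assumes w: "w \<in> {0..1}" "w' \<in> {0..1}" "w' < w"
  shows "\<exists>kbar \<in> {1..min (Kw lam mu c F f g w') (Kw lam mu c F f g w)}.
           (\<forall>k \<in> {1..kbar}. vh w k \<le> vh w' k) \<and>
           (\<forall>k. kbar + 1 \<le> k \<and> k \<le> min (Kw lam mu c F f g w') (Kw lam mu c F f g w) \<longrightarrow>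
                vh w k > vh w' k)"
proof -
  define m0 where "m0 = min (Kw lam mu c F f g w') (Kw lam mu c F f g w)"
  have m1: "m0 \<ge> 1" using K_props(1)[OF w(1)] K_props(1)[OF w(2)] by (simp add: m0_def)
  have lt: "vh w k < 1" "vh w' k < 1" if "1 \<le> k" "k \<le> m0" for k
    using K_props(2)[OF w(1), of k] K_props(2)[OF w(2), of k] that by (auto simp: m0_def)
  define A where "A = {k \<in> {1..m0}. \<forall>j\<in>{1..k}. vh w j \<le> vh w' j}"
  have one: "1 \<in> A" unfolding A_def using m1 C1[OF w(1,2)] w(3) by auto
  have fin: "finite A" unfolding A_def by simp
  define kb where "kb = Max A"
  have kbA: "kb \<in> A" unfolding kb_def using fin one Max_in by blast
  have kbmax: "k \<le> kb" if "k \<in> A" for k unfolding kb_def using fin that by simp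
  have up: "kb + 1 + d \<le> m0 \<longrightarrow> vh w' (kb + 1 + d) < vh w (kb + 1 + d)" for d
  proof (induction d)
    case 0
    show ?case
    proof
      assume le: "kb + 1 + 0 \<le> m0"
      show "vh w' (kb + 1 + 0) < vh w (kb + 1 + 0)"
      proof (rule ccontr)
        assume "\<not> ?thesis"
        then have "vh w (kb + 1) \<le> vh w' (kb + 1)" by simp
        then have "kb + 1 \<in> A" using kbA le unfolding A_def
          by (auto simp: le_Suc_eq)
        then show False using kbmax by fastforce
      qed
    qed
  next
    case (Suc d)
    show ?case
    proof
      assume le: "kb + 1 + Suc d \<le> m0"
      have ih: "vh w' (Suc (kb + d)) < vh w (Suc (kb + d))" using Suc.IH le by simp
      have kb1: "kb \<ge> 1" using kbA by (simp add: A_def)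
      have "vh w' (Suc (Suc (kb + d))) < vh w (Suc (Suc (kb + d)))"
        using C2[OF w(1,2) _ _ _ ih] lt[of "Suc (Suc (kb + d))"] le w(3) by simp
      then show "vh w' (kb + 1 + Suc d) < vh w (kb + 1 + Suc d)" by simp
    qed
  qed
  show ?thesis unfolding m0_def[symmetric]
  proof (rule bexI[of _ kb], intro conjI allI impI)
    show "kb \<in> {1..m0}" using kbA by (simp add: A_def)
    show "\<forall>k\<in>{1..kb}. vh w k \<le> vh w' k" using kbA by (simp add: A_def)
    fix k assume k: "kb + 1 \<le> k \<and> k \<le> m0"
    then show "vh w' k < vh w k" using up[of "k - kb - 1"] by simp
  qed
qed

end


theorem proposition3:
  fixes lam mu c w w' :: real and F f g :: "real \<Rightarrow> real"
  assumes mu_pos: "mu > 0" and lam_pos: "lam > 0" and c_pos: "c > 0"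
    and c_lt: "c < mu"
    and f_pos: "\<forall>v\<in>{0..1}. f v > 0"
    and g_int: "g absolutely_integrable_on {0..1}"
    and f_ac: "\<forall>x\<in>{0..1}. (g has_integral (f x - f 0)) {0..x}"
    and F_def: "\<forall>x\<in>{0..1}. F x = integral {0..x} f"
    and F_one: "F 1 = 1"
    and J_mono: "strict_mono_on {0..1} (Jw F f 0)"
    and J0: "Jw F f 0 0 < 0"
    and ihr: "\<forall>x\<in>{0..1}. \<forall>y\<in>{0..1}. x \<le> y \<longrightarrow> (1 - F y) / f y \<le> (1 - F x) / f x"
    and w_range: "w \<in> {0..1}" "w' \<in> {0..1}" and ww': "w > w'"
  shows "\<exists>kbar \<in> {1..min (Kw lam mu c F f g w') (Kw lam mu c F f g w)}.
           (\<forall>k \<in> {1..kbar}. vhat lam mu c F f g w k \<le> vhat lam mu c F f g w' k) \<and>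
           (\<forall>k. kbar + 1 \<le> k \<and> k \<le> min (Kw lam mu c F f g w') (Kw lam mu c F f g w) \<longrightarrow>
                vhat lam mu c F f g w k > vhat lam mu c F f g w' k)"
proof -
  have "mkt lam mu c F f g"
    unfolding mkt_def using mu_pos lam_pos c_pos c_lt f_pos g_int f_ac F_def F_one J_mono J0 ihr
    by blast
  then interpret mkt lam mu c F f g .
  show ?thesis by (rule main[OF w_range ww'])
qed

end
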